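(* In the standing setting below, let $X_i=(x_i,u_i)\in\mathbb{X}\times\mathbb{R}$ for $i=0,1$. Then for every $x\in\mathbb{X}$, $$F_{X_0X_1}(x)=\sup\Big(\bigcup_{i=0,1}\{-c(x,y)+c(x_i,y)+u_i:\ y\in\mathbb{Y},\ -c(x_{i+1},y)+c(x_i,y)+u_i\le u_{i+1}\}\Big),$$ where indices are taken modulo 2 (so $x_{1+1}=x_0$, $u_{1+1}=u_0$).
   Context: Standing setting: $\mathbb{X},\mathbb{Y}\subset\mathbb{R}^n$ are compact with non-empty interior; $c:\mathbb{X}\times\mathbb{Y}\to\mathbb{R}$ has continuous $D_xc$, $D_yc$, and continuous mixed second derivatives with $D^2_{xy}c=(D^2_{yx}c)^T$; for each $x$ the map $y\mapsto -D_xc(x,y)$ is injective on $\mathbb{Y}$ and for each $y$ the map $x\mapsto -D_yc(x,y)$ is injective on $\mathbb{X}$; $D^2_{xy}c(x,y)$ is invertible everywhere; for every $y$ the set $\{-D_yc(x,y):x\in\mathbb{X}\}$ is convex and for every $x$ the set $\{-D_xc(x,y):y\in\mathbb{Y}\}$ is convex. $c$-chord: for $X_i=(x_i,u_i)\in\mathbb{X}\times\mathbb{R}$, $F_{X_0X_1}(x)=\sup\{-c(x,y)+h: y\in\mathbb{Y},h\in\mathbb{R},-c(x_i,y)+h\le u_i, i=0,1\}$. *)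

theory Defs
  imports "HOL-Analysis.Analysis"
begin

definition standing_setting ::
  "(real^'n) set \<Rightarrow> (real^'n) set \<Rightarrow> (real^'n \<Rightarrow> real^'n \<Rightarrow> real) \<Rightarrow> bool" where
  "standing_setting X Y c \<longleftrightarrow>
     compact X \<and> compact Y \<and> interior X \<noteq> {} \<and> interior Y \<noteq> {} \<and>
     (\<exists>(Dx :: real^'n \<Rightarrow> real^'n \<Rightarrow> real^'n) (Dy :: real^'n \<Rightarrow> real^'n \<Rightarrow> real^'n)
        (Dxy :: real^'n \<Rightarrow> real^'n \<Rightarrow> real^'n^'n) (Dyx :: real^'n \<Rightarrow> real^'n \<Rightarrow> real^'n^'n).
       (\<forall>x\<in>X. \<forall>y\<in>Y. ((\<lambda>x'. c x' y) has_derivative (\<lambda>h. Dx x y \<bullet> h)) (at x within X)) \<and>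
       (\<forall>x\<in>X. \<forall>y\<in>Y. ((\<lambda>y'. c x y') has_derivative (\<lambda>k. Dy x y \<bullet> k)) (at y within Y)) \<and>
       continuous_on (X \<times> Y) (\<lambda>(x, y). Dx x y) \<and>
       continuous_on (X \<times> Y) (\<lambda>(x, y). Dy x y) \<and>
       (\<forall>x\<in>X. \<forall>y\<in>Y. ((\<lambda>y'. Dx x y') has_derivative (\<lambda>k. Dxy x y *v k)) (at y within Y)) \<and>
       (\<forall>x\<in>X. \<forall>y\<in>Y. ((\<lambda>x'. Dy x' y) has_derivative (\<lambda>h. Dyx x y *v h)) (at x within X)) \<and>
       continuous_on (X \<times> Y) (\<lambda>(x, y). Dxy x y) \<and>
       continuous_on (X \<times> Y) (\<lambda>(x, y). Dyx x y) \<and>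
       (\<forall>x\<in>X. \<forall>y\<in>Y. Dxy x y = transpose (Dyx x y)) \<and>
       (\<forall>x\<in>X. inj_on (\<lambda>y. - Dx x y) Y) \<and>
       (\<forall>y\<in>Y. inj_on (\<lambda>x. - Dy x y) X) \<and>
       (\<forall>x\<in>X. \<forall>y\<in>Y. invertible (Dxy x y)) \<and>
       (\<forall>y\<in>Y. convex ((\<lambda>x. - Dy x y) ` X)) \<and>
       (\<forall>x\<in>X. convex ((\<lambda>y. - Dx x y) ` Y)))"

definition c_chord ::
  "(real^'n) set \<Rightarrow> (real^'n \<Rightarrow> real^'n \<Rightarrow> real) \<Rightarrow> real^'n \<Rightarrow> real \<Rightarrow> real^'n \<Rightarrow> real
     \<Rightarrow> real^'n \<Rightarrow> real" where
  "c_chord Y c x0 u0 x1 u1 x =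
     Sup {- c x y + h | y h. y \<in> Y \<and> - c x0 y + h \<le> u0 \<and> - c x1 y + h \<le> u1}"

end

theory Submission
  imports Defs
begin

lemma Sup_real_ub_eq:
  assumes "\<And>z::real. (\<forall>s\<in>S. s \<le> z) \<longleftrightarrow> (\<forall>t\<in>T. t \<le> z)"
  shows "Sup S = Sup T"
  unfolding Sup_real_def using assms by simp

theorem lemma3p3:
  fixes X Y :: "(real^'n) set" and c :: "real^'n \<Rightarrow> real^'n \<Rightarrow> real"
    and x0 x1 x :: "real^'n" and u0 u1 :: real
  assumes "standing_setting X Y c"
    and "x0 \<in> X" and "x1 \<in> X" and "x \<in> X"
  shows "c_chord Y c x0 u0 x1 u1 x =
    Sup ({- c x y + c x0 y + u0 | y. y \<in> Y \<and> - c x1 y + c x0 y + u0 \<le> u1}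
       \<union> {- c x y + c x1 y + u1 | y. y \<in> Y \<and> - c x0 y + c x1 y + u1 \<le> u0})"
  unfolding c_chord_def
proof (rule Sup_real_ub_eq)
  fix z :: real
  show "(\<forall>s\<in>{- c x y + h | y h. y \<in> Y \<and> - c x0 y + h \<le> u0 \<and> - c x1 y + h \<le> u1}. s \<le> z) \<longleftrightarrow>
    (\<forall>t\<in>({- c x y + c x0 y + u0 | y. y \<in> Y \<and> - c x1 y + c x0 y + u0 \<le> u1}
       \<union> {- c x y + c x1 y + u1 | y. y \<in> Y \<and> - c x0 y + c x1 y + u1 \<le> u0}). t \<le> z)"
  proof
    assume H: "\<forall>s\<in>{- c x y + h | y h. y \<in> Y \<and> - c x0 y + h \<le> u0 \<and> - c x1 y + h \<le> u1}. s \<le> z"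
    show "\<forall>t\<in>({- c x y + c x0 y + u0 | y. y \<in> Y \<and> - c x1 y + c x0 y + u0 \<le> u1}
       \<union> {- c x y + c x1 y + u1 | y. y \<in> Y \<and> - c x0 y + c x1 y + u1 \<le> u0}). t \<le> z"
    proof
      fix t assume "t \<in> ({- c x y + c x0 y + u0 | y. y \<in> Y \<and> - c x1 y + c x0 y + u0 \<le> u1}
       \<union> {- c x y + c x1 y + u1 | y. y \<in> Y \<and> - c x0 y + c x1 y + u1 \<le> u0})"
      then obtain y where y: "y \<in> Y" and D: "(t = - c x y + (c x0 y + u0) \<and> - c x1 y + (c x0 y + u0) \<le> u1) \<or>
         (t = - c x y + (c x1 y + u1) \<and> - c x0 y + (c x1 y + u1) \<le> u0)"
        by auto
      from D show "t \<le> z"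
      proof
        assume a: "t = - c x y + (c x0 y + u0) \<and> - c x1 y + (c x0 y + u0) \<le> u1"
        have "- c x y + (c x0 y + u0) \<le> z"
          using H y a by force
        then show ?thesis using a by simp
      next
        assume a: "t = - c x y + (c x1 y + u1) \<and> - c x0 y + (c x1 y + u1) \<le> u0"
        have "- c x y + (c x1 y + u1) \<le> z"
          using H y a by force
        then show ?thesis using a by simp
      qed
    qed
  next
    assume H: "\<forall>t\<in>({- c x y + c x0 y + u0 | y. y \<in> Y \<and> - c x1 y + c x0 y + u0 \<le> u1}
       \<union> {- c x y + c x1 y + u1 | y. y \<in> Y \<and> - c x0 y + c x1 y + u1 \<le> u0}). t \<le> z"
    show "\<forall>s\<in>{- c x y + h | y h. y \<in> Y \<and> - c x0 y + h \<le> u0 \<and> - c x1 y + h \<le> u1}. s \<le> z"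
    proof
      fix s assume "s \<in> {- c x y + h | y h. y \<in> Y \<and> - c x0 y + h \<le> u0 \<and> - c x1 y + h \<le> u1}"
      then obtain y h where y: "y \<in> Y" and s: "s = - c x y + h" and h0: "- c x0 y + h \<le> u0"
        and h1: "- c x1 y + h \<le> u1" by auto
      show "s \<le> z"
      proof (cases "- c x1 y + c x0 y + u0 \<le> u1")
        case True
        then have "- c x y + c x0 y + u0 \<le> z" using H y by blast
        then show ?thesis using s h0 by linarith
      next
        case False
        then have "- c x0 y + c x1 y + u1 \<le> u0" by linarith
        then have "- c x y + c x1 y + u1 \<le> z" using H y by blast
        then show ?thesis using s h1 by linarith
      qed
    qed
  qed
qed

end
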